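(* Let $g$ be any connected undirected graph (system) with diameter $diam(g)$. Every protocol $\pi$ in the state model that is self-stabilizing for the mutual exclusion specification $spec_{EM}$ on $g$ satisfies $temps\_stab(\pi,ds)\ge \lceil diam(g)/2\rceil$, where $ds$ is the synchronous daemon.
   Context: Model (state model with shared variables): a distributed system is a connected undirected graph $g=(V,E)$ whose vertices are processors and edges are communication links; $diam(g)$ is its diameter. Each processor has a unique identity. The state of a processor is the value of its variables; a configuration is the tuple of all processor states. A protocol is a set of rules $\langle guard\rangle \to \langle action\rangle$, where the guard is a predicate on the state of the processor and of its neighbours and the action updates the processor's own state. A processor is enabled if one of its guards is true. In a step, a daemon selects a nonempty subset of the enabled processors, and each selected processor atomically executes its action, all selected processors reading the configuration at the beginning of the step. The synchronous daemon $ds$ selects all enabled processors at every step. Self-stabilization and stabilization time: a protocol $\pi$ is self-stabilizing for $spec$ under daemon $d$ if, from any configuration, every execution of $\pi$ under $d$ contains a configuration from which every execution of $\pi$ under $d$ satisfies $spec$. $temps\_stab(\pi,d)$ is the worst case, over all initial configurations and all executions of $\pi$ under $d$, of the number of steps until such a configuration is reached. Mutual exclusion: each processor $v$ has a predicate $privilege_v$ on its state; $v$ is privileged in a configuration $\gamma$ iff $privilege_v$ is true in $\gamma$; if $v$ is privileged in $\gamma$ and is activated during step $(\gamma,\gamma')$, then $v$ executes its critical section during that step. An execution satisfies $spec_{EM}$ if in every configuration at most one processor is privileged (safety) and every processor executes its critical section infinitely often (liveness). *)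

theory Defs
  imports Complex_Main "HOL-Library.Extended_Nat"
begin

definition undirected_connected :: "('v::finite \<Rightarrow> 'v \<Rightarrow> bool) \<Rightarrow> bool" where
  "undirected_connected E \<longleftrightarrow>
     (\<forall>u v. E u v \<longrightarrow> E v u) \<and> (\<forall>u. \<not> E u u) \<and>
     (\<forall>u v. (u, v) \<in> {(a, b). E a b}\<^sup>*)"

definition gdist :: "('v \<Rightarrow> 'v \<Rightarrow> bool) \<Rightarrow> 'v \<Rightarrow> 'v \<Rightarrow> nat" where
  "gdist E u v = (LEAST n. (u, v) \<in> {(a, b). E a b} ^^ n)"

definition diam :: "('v::finite \<Rightarrow> 'v \<Rightarrow> bool) \<Rightarrow> nat" where
  "diam E = Max {gdist E u v | u v. True}"

type_synonym ('v, 's) config = "'v \<Rightarrow> 's"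

text \<open>A rule is a pair (guard, action); rules v is the (finite) set of rules of
  processor v. Guards and actions may only read the states of v and its neighbours.\<close>
type_synonym ('v, 's) rule = "(('v, 's) config \<Rightarrow> bool) \<times> (('v, 's) config \<Rightarrow> 's)"
type_synonym ('v, 's) protocol = "'v \<Rightarrow> ('v, 's) rule set"

definition is_protocol :: "('v \<Rightarrow> 'v \<Rightarrow> bool) \<Rightarrow> ('v, 's) protocol \<Rightarrow> bool" where
  "is_protocol E \<pi> \<longleftrightarrow>
     (\<forall>v. finite (\<pi> v)) \<and>
     (\<forall>v r \<gamma> \<gamma>'. r \<in> \<pi> v \<longrightarrow> (\<forall>u. u = v \<or> E v u \<longrightarrow> \<gamma> u = \<gamma>' u) \<longrightarrow>
        (fst r \<gamma> = fst r \<gamma>' \<and> snd r \<gamma> = snd r \<gamma>'))"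

definition enabled :: "('v, 's) protocol \<Rightarrow> ('v, 's) config \<Rightarrow> 'v set" where
  "enabled \<pi> \<gamma> = {v. \<exists>r \<in> \<pi> v. fst r \<gamma>}"

definition step :: "('v, 's) protocol \<Rightarrow> ('v, 's) config \<Rightarrow> 'v set \<Rightarrow> ('v, 's) config \<Rightarrow> bool" where
  "step \<pi> \<gamma> S \<gamma>' \<longleftrightarrow>
     (\<forall>v. v \<notin> S \<longrightarrow> \<gamma>' v = \<gamma> v) \<and>
     (\<forall>v \<in> S. \<exists>r \<in> \<pi> v. fst r \<gamma> \<and> \<gamma>' v = snd r \<gamma>)"

text \<open>A daemon is given by the selections it may make: d En S holds if the daemon
  may select S when En is the set of enabled processors.\<close>
type_synonym 'v daemon = "'v set \<Rightarrow> 'v set \<Rightarrow> bool"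

definition ds :: "'v daemon" where
  "ds En S \<longleftrightarrow> S = En"

text \<open>A finite (maximal) execution ending in a terminal configuration is
  represented by repeating the terminal configuration with empty activated sets.\<close>
type_synonym ('v, 's) execution = "(nat \<Rightarrow> ('v, 's) config) \<times> (nat \<Rightarrow> 'v set)"

definition is_exec :: "('v, 's) protocol \<Rightarrow> 'v daemon \<Rightarrow> ('v, 's) execution \<Rightarrow> bool" where
  "is_exec \<pi> d e \<longleftrightarrow>
     (\<forall>i. if enabled \<pi> (fst e i) = {}
          then snd e i = {} \<and> fst e (Suc i) = fst e i
          else snd e i \<noteq> {} \<and> snd e i \<subseteq> enabled \<pi> (fst e i) \<and>
               d (enabled \<pi> (fst e i)) (snd e i) \<and>
               step \<pi> (fst e i) (snd e i) (fst e (Suc i)))"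

text \<open>priv v s: processor v with local state s is privileged.\<close>
definition spec_EM :: "('v \<Rightarrow> 's \<Rightarrow> bool) \<Rightarrow> ('v, 's) execution \<Rightarrow> bool" where
  "spec_EM priv e \<longleftrightarrow>
     (\<forall>i. card {v. priv v (fst e i v)} \<le> 1) \<and>
     (\<forall>v. infinite {i. priv v (fst e i v) \<and> v \<in> snd e i})"

definition legitimate ::
  "('v, 's) protocol \<Rightarrow> 'v daemon \<Rightarrow> (('v, 's) execution \<Rightarrow> bool) \<Rightarrow> ('v, 's) config \<Rightarrow> bool" where
  "legitimate \<pi> d spec \<gamma> \<longleftrightarrow> (\<forall>e. is_exec \<pi> d e \<and> fst e 0 = \<gamma> \<longrightarrow> spec e)"

definition self_stabilizing ::
  "('v, 's) protocol \<Rightarrow> 'v daemon \<Rightarrow> (('v, 's) execution \<Rightarrow> bool) \<Rightarrow> bool" where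
  "self_stabilizing \<pi> d spec \<longleftrightarrow>
     (\<forall>e. is_exec \<pi> d e \<longrightarrow> (\<exists>k. legitimate \<pi> d spec (fst e k)))"

definition stab_steps ::
  "('v, 's) protocol \<Rightarrow> 'v daemon \<Rightarrow> (('v, 's) execution \<Rightarrow> bool) \<Rightarrow> ('v, 's) execution \<Rightarrow> enat" where
  "stab_steps \<pi> d spec e =
     (if \<exists>k. legitimate \<pi> d spec (fst e k)
      then enat (LEAST k. legitimate \<pi> d spec (fst e k)) else \<infinity>)"

definition temps_stab ::
  "('v, 's) protocol \<Rightarrow> 'v daemon \<Rightarrow> (('v, 's) execution \<Rightarrow> bool) \<Rightarrow> enat" where
  "temps_stab \<pi> d spec = (SUP e \<in> {e. is_exec \<pi> d e}. stab_steps \<pi> d spec e)"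

end

theory Submission
  imports Defs
begin

definition ball :: "('v \<Rightarrow> 'v \<Rightarrow> bool) \<Rightarrow> 'v \<Rightarrow> nat \<Rightarrow> 'v \<Rightarrow> bool" where
  "ball E u r w \<longleftrightarrow> (\<exists>p\<le>r. (u, w) \<in> {(a, b). E a b} ^^ p)"

lemma ball_mono: "ball E u r w \<Longrightarrow> r \<le> r' \<Longrightarrow> ball E u r' w"
  unfolding ball_def by (meson order_trans)

lemma ball_step: "ball E u r w \<Longrightarrow> E w x \<Longrightarrow> ball E u (Suc r) x"
  unfolding ball_def by (metis (mono_tags, lifting) Suc_le_mono case_prodI mem_Collect_eq relpow_Suc_I)

lemma ball_zero: "ball E u 0 u"
  unfolding ball_def by simp

lemma relpow_sym:
  assumes "\<forall>a b. E a b \<longrightarrow> E b a"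
  shows "(x, y) \<in> {(a, b). E a b} ^^ n \<Longrightarrow> (y, x) \<in> {(a, b). E a b} ^^ n"
proof (induction n arbitrary: y)
  case 0 then show ?case by simp
next
  case (Suc n)
  then obtain z where "(x, z) \<in> {(a, b). E a b} ^^ n" "E z y" by auto
  then have "(z, x) \<in> {(a, b). E a b} ^^ n" "E y z" using Suc.IH assms by auto
  moreover have "(y, z) \<in> {(a, b). E a b}" using \<open>E y z\<close> by simp
  ultimately show ?case by (blast intro: relpow_Suc_I2)
qed

lemma ball_disj:
  assumes "\<forall>a b. E a b \<longrightarrow> E b a" "ball E u p w" "ball E v q w"
  shows "gdist E u v \<le> p + q"
proof -
  obtain p' q' where "p' \<le> p" "q' \<le> q" "(u, w) \<in> {(a, b). E a b} ^^ p'"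
    "(v, w) \<in> {(a, b). E a b} ^^ q'" using assms(2,3) unfolding ball_def by auto
  then have "(w, v) \<in> {(a, b). E a b} ^^ q'" using relpow_sym[OF assms(1)] by blast
  then have "(u, v) \<in> {(a, b). E a b} ^^ (p' + q')"
    using \<open>(u, w) \<in> _\<close> by (auto simp: relpow_add)
  then have "gdist E u v \<le> p' + q'" unfolding gdist_def by (rule Least_le)
  then show ?thesis using \<open>p' \<le> p\<close> \<open>q' \<le> q\<close> by simp
qed

definition nxtv :: "('v, 's) protocol \<Rightarrow> ('v, 's) config \<Rightarrow> 'v \<Rightarrow> 's \<Rightarrow> 's" where
  "nxtv \<pi> \<gamma> w p = (if w \<in> enabled \<pi> \<gamma> then
     (if \<exists>r\<in>\<pi> w. fst r \<gamma> \<and> p = snd r \<gamma> then p else (SOME s. \<exists>r\<in>\<pi> w. fst r \<gamma> \<and> s = snd r \<gamma>))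
     else \<gamma> w)"

primrec gcfg :: "('v, 's) protocol \<Rightarrow> (nat \<Rightarrow> 'v \<Rightarrow> 's) \<Rightarrow> ('v, 's) config \<Rightarrow> nat \<Rightarrow> ('v, 's) config" where
  "gcfg \<pi> pref c 0 = c"
| "gcfg \<pi> pref c (Suc i) = (\<lambda>w. nxtv \<pi> (gcfg \<pi> pref c i) w (pref i w))"

lemma gexec_is_exec:
  "is_exec \<pi> ds (gcfg \<pi> pref c, \<lambda>i. enabled \<pi> (gcfg \<pi> pref c i))"
  unfolding is_exec_def
proof (intro allI)
  fix i
  let ?g = "gcfg \<pi> pref c i"
  show "if enabled \<pi> (fst (gcfg \<pi> pref c, \<lambda>i. enabled \<pi> (gcfg \<pi> pref c i)) i) = {}
          then snd (gcfg \<pi> pref c, \<lambda>i. enabled \<pi> (gcfg \<pi> pref c i)) i = {} \<and>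
               fst (gcfg \<pi> pref c, \<lambda>i. enabled \<pi> (gcfg \<pi> pref c i)) (Suc i) =
               fst (gcfg \<pi> pref c, \<lambda>i. enabled \<pi> (gcfg \<pi> pref c i)) i
          else snd (gcfg \<pi> pref c, \<lambda>i. enabled \<pi> (gcfg \<pi> pref c i)) i \<noteq> {} \<and>
               snd (gcfg \<pi> pref c, \<lambda>i. enabled \<pi> (gcfg \<pi> pref c i)) i
               \<subseteq> enabled \<pi> (fst (gcfg \<pi> pref c, \<lambda>i. enabled \<pi> (gcfg \<pi> pref c i)) i) \<and>
               ds (enabled \<pi> (fst (gcfg \<pi> pref c, \<lambda>i. enabled \<pi> (gcfg \<pi> pref c i)) i))
                (snd (gcfg \<pi> pref c, \<lambda>i. enabled \<pi> (gcfg \<pi> pref c i)) i) \<and>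
               step \<pi> (fst (gcfg \<pi> pref c, \<lambda>i. enabled \<pi> (gcfg \<pi> pref c i)) i)
                (snd (gcfg \<pi> pref c, \<lambda>i. enabled \<pi> (gcfg \<pi> pref c i)) i)
                (fst (gcfg \<pi> pref c, \<lambda>i. enabled \<pi> (gcfg \<pi> pref c i)) (Suc i))"
  proof (cases "enabled \<pi> ?g = {}")
    case True
    then show ?thesis by (auto simp: nxtv_def)
  next
    case False
    have "step \<pi> ?g (enabled \<pi> ?g) (gcfg \<pi> pref c (Suc i))"
      unfolding step_def
    proof (intro conjI allI impI ballI)
      fix v assume "v \<notin> enabled \<pi> ?g"
      then show "gcfg \<pi> pref c (Suc i) v = ?g v" by (simp add: nxtv_def)
    next
      fix v assume en: "v \<in> enabled \<pi> ?g"
      then have ex: "\<exists>r\<in>\<pi> v. fst r ?g" by (simp add: enabled_def)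
      show "\<exists>r\<in>\<pi> v. fst r ?g \<and> gcfg \<pi> pref c (Suc i) v = snd r ?g"
      proof (cases "\<exists>r\<in>\<pi> v. fst r ?g \<and> pref i v = snd r ?g")
        case True
        then show ?thesis using en by (auto simp: nxtv_def)
      next
        case False
        have "\<exists>s. \<exists>r\<in>\<pi> v. fst r ?g \<and> s = snd r ?g" using ex by auto
        then have "\<exists>r\<in>\<pi> v. fst r ?g \<and> (SOME s. \<exists>r\<in>\<pi> v. fst r ?g \<and> s = snd r ?g) = snd r ?g"
          by (rule someI_ex)
        then show ?thesis using en False by (simp add: nxtv_def)
      qed
    qed
    then show ?thesis using False by (simp add: ds_def)
  qed
qed

lemma loc_step:
  assumes prot: "is_protocol E \<pi>" and ex: "is_exec \<pi> ds e"
    and nb: "\<forall>x. x = w \<or> E w x \<longrightarrow> \<gamma> x = fst e t x"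
  shows "nxtv \<pi> \<gamma> w (fst e (Suc t) w) = fst e (Suc t) w"
proof -
  have eq: "\<forall>r\<in>\<pi> w. fst r \<gamma> = fst r (fst e t) \<and> snd r \<gamma> = snd r (fst e t)"
    using prot nb unfolding is_protocol_def by blast
  have en: "w \<in> enabled \<pi> \<gamma> \<longleftrightarrow> w \<in> enabled \<pi> (fst e t)"
    using eq by (auto simp: enabled_def)
  have gw: "\<gamma> w = fst e t w" using nb by auto
  have et: "if enabled \<pi> (fst e t) = {}
          then snd e t = {} \<and> fst e (Suc t) = fst e t
          else snd e t \<noteq> {} \<and> snd e t \<subseteq> enabled \<pi> (fst e t) \<and>
               ds (enabled \<pi> (fst e t)) (snd e t) \<and>
               step \<pi> (fst e t) (snd e t) (fst e (Suc t))"
    using ex unfolding is_exec_def by blast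
  show ?thesis
  proof (cases "enabled \<pi> (fst e t) = {}")
    case True
    then show ?thesis using et en gw by (simp add: nxtv_def)
  next
    case False
    then have S: "snd e t = enabled \<pi> (fst e t)" and st: "step \<pi> (fst e t) (snd e t) (fst e (Suc t))"
      using et by (auto simp: ds_def)
    show ?thesis
    proof (cases "w \<in> enabled \<pi> (fst e t)")
      case True
      then obtain r where "r \<in> \<pi> w" "fst r (fst e t)" "fst e (Suc t) w = snd r (fst e t)"
        using st S unfolding step_def by blast
      then have "\<exists>r\<in>\<pi> w. fst r \<gamma> \<and> fst e (Suc t) w = snd r \<gamma>" using eq by auto
      then show ?thesis using True en by (simp add: nxtv_def)
    next
      case False
      then have "fst e (Suc t) w = fst e t w" using st S unfolding step_def by blast
      then show ?thesis using False en gw by (simp add: nxtv_def)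
    qed
  qed
qed

lemma suffix_exec:
  assumes "is_exec \<pi> d e"
  shows "is_exec \<pi> d (\<lambda>i. fst e (j + i), \<lambda>i. snd e (j + i))"
  using assms unfolding is_exec_def
  by (metis add_Suc_right fst_conv snd_conv)

theorem theorem3:
  fixes E :: "'v::finite \<Rightarrow> 'v \<Rightarrow> bool"
    and \<pi> :: "('v, 's) protocol"
    and priv :: "'v \<Rightarrow> 's \<Rightarrow> bool"
  assumes "undirected_connected E"
    and "is_protocol E \<pi>"
    and "self_stabilizing \<pi> ds (spec_EM priv)"
  shows "enat (nat \<lceil>real (diam E) / 2\<rceil>) \<le> temps_stab \<pi> ds (spec_EM priv)"
proof -
  define K where "K = nat \<lceil>real (diam E) / 2\<rceil>"
  show ?thesis
  proof (cases "K = 0")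
    case True
    then show ?thesis by (simp add: K_def[symmetric] zero_enat_def[symmetric])
  next
    case False
    define k where "k = K - 1"
    have k2: "2 * k < diam E"
    proof -
      have c: "real_of_int \<lceil>real (diam E) / 2\<rceil> - 1 < real (diam E) / 2"
        using ceiling_correct by blast
      have "real K = real_of_int \<lceil>real (diam E) / 2\<rceil>" unfolding K_def
        by simp
      then have "real k < real (diam E) / 2" using c False unfolding k_def by (simp add: of_nat_diff)
      then show ?thesis by linarith
    qed
    have sym: "\<forall>a b. E a b \<longrightarrow> E b a" using assms(1) unfolding undirected_connected_def by blast
    have fin: "finite {gdist E u v | u v. True}"
    proof -
      have "{gdist E u v | u v. True} = (\<lambda>(u, v). gdist E u v) ` UNIV" by auto
      then show ?thesis by simp
    qed
    have "diam E \<in> {gdist E u v | u v. True}" unfolding diam_def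
      by (rule Max_in[OF fin]) auto
    then obtain u v where uv: "gdist E u v = diam E" by auto
    have disj: "\<And>w. ball E u k w \<Longrightarrow> ball E v k w \<Longrightarrow> False"
      using ball_disj[OF sym] uv k2 by (metis mult_2 not_le)
    define e0 :: "('v, 's) execution" where
      "e0 = (gcfg \<pi> (\<lambda>i w. undefined) (\<lambda>w. undefined),
             \<lambda>i. enabled \<pi> (gcfg \<pi> (\<lambda>i w. undefined) (\<lambda>w. undefined) i))"
    have "is_exec \<pi> ds e0" unfolding e0_def by (rule gexec_is_exec)
    then obtain j0 where leg: "legitimate \<pi> ds (spec_EM priv) (fst e0 j0)"
      using assms(3) unfolding self_stabilizing_def by blast
    define e where "e = (\<lambda>i. fst e0 (j0 + i), \<lambda>i. snd e0 (j0 + i))"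
    have ex: "is_exec \<pi> ds e" unfolding e_def by (rule suffix_exec) fact
    have "spec_EM priv e" using leg ex unfolding legitimate_def e_def by auto
    then have live: "\<And>x. infinite {i. priv x (fst e i x) \<and> x \<in> snd e i}"
      unfolding spec_EM_def by blast
    obtain a where a: "a \<ge> k" "priv u (fst e a u)"
      using live[of u] unfolding infinite_nat_iff_unbounded_le by blast
    obtain b where b: "b \<ge> k" "priv v (fst e b v)"
      using live[of v] unfolding infinite_nat_iff_unbounded_le by blast
    define c0 where "c0 = (\<lambda>w. if ball E u k w then fst e (a - k) w
        else if ball E v k w then fst e (b - k) w else fst e 0 w)"
    define pref where "pref = (\<lambda>i w. if Suc i \<le> k \<and> ball E u (k - Suc i) w then fst e (a - k + Suc i) w
        else if Suc i \<le> k \<and> ball E v (k - Suc i) w then fst e (b - k + Suc i) w else fst e 0 w)"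
    define f :: "('v, 's) execution" where
      "f = (gcfg \<pi> pref c0, \<lambda>i. enabled \<pi> (gcfg \<pi> pref c0 i))"
    have fex: "is_exec \<pi> ds f" unfolding f_def by (rule gexec_is_exec)
    have inv: "i \<le> k \<Longrightarrow> (\<forall>w. ball E u (k - i) w \<longrightarrow> fst f i w = fst e (a - k + i) w) \<and>
                         (\<forall>w. ball E v (k - i) w \<longrightarrow> fst f i w = fst e (b - k + i) w)" for i
    proof (induction i)
      case 0
      show ?case
      proof (intro conjI allI impI)
        fix w assume "ball E u (k - 0) w"
        then show "fst f 0 w = fst e (a - k + 0) w" by (simp add: f_def c0_def)
      next
        fix w assume "ball E v (k - 0) w"
        then show "fst f 0 w = fst e (b - k + 0) w" using disj by (auto simp: f_def c0_def)
      qed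
    next
      case (Suc i)
      then have IH: "(\<forall>w. ball E u (k - i) w \<longrightarrow> fst f i w = fst e (a - k + i) w) \<and>
                     (\<forall>w. ball E v (k - i) w \<longrightarrow> fst f i w = fst e (b - k + i) w)" by simp
      have ki: "Suc (k - Suc i) = k - i" using Suc.prems by simp
      show ?case
      proof (intro conjI allI impI)
        fix w assume w: "ball E u (k - Suc i) w"
        have nb: "\<forall>x. x = w \<or> E w x \<longrightarrow> fst f i x = fst e (a - k + i) x"
        proof (intro allI impI)
          fix x assume "x = w \<or> E w x"
          then have "ball E u (k - i) x"
            using w ball_mono[OF w] ball_step[OF w] ki by (metis diff_le_mono2 le_Suc_eq)
          then show "fst f i x = fst e (a - k + i) x" using IH by blast
        qed
        have "pref i w = fst e (Suc (a - k + i)) w" using w Suc.prems by (simp add: pref_def)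
        then show "fst f (Suc i) w = fst e (a - k + Suc i) w"
          using loc_step[OF assms(2) ex nb[unfolded f_def fst_conv]]
          by (simp add: f_def)
      next
        fix w assume w: "ball E v (k - Suc i) w"
        have nb: "\<forall>x. x = w \<or> E w x \<longrightarrow> fst f i x = fst e (b - k + i) x"
        proof (intro allI impI)
          fix x assume "x = w \<or> E w x"
          then have "ball E v (k - i) x"
            using w ball_mono[OF w] ball_step[OF w] ki by (metis diff_le_mono2 le_Suc_eq)
          then show "fst f i x = fst e (b - k + i) x" using IH by blast
        qed
        have "\<not> ball E u (k - Suc i) w"
          using disj ball_mono[OF w, of k] ball_mono[of E u "k - Suc i" w k] by auto
        then have "pref i w = fst e (Suc (b - k + i)) w" using w Suc.prems by (simp add: pref_def)
        then show "fst f (Suc i) w = fst e (b - k + Suc i) w"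
          using loc_step[OF assms(2) ex nb[unfolded f_def fst_conv]]
          by (simp add: f_def)
      qed
    qed
    have pu: "priv u (fst f k u)" using inv[of k] ball_zero[of E u] a by simp
    have pv: "priv v (fst f k v)" using inv[of k] ball_zero[of E v] b by simp
    have une: "u \<noteq> v" using disj ball_mono[OF ball_zero[of E u], of k] by auto
    have notleg: "\<not> legitimate \<pi> ds (spec_EM priv) (fst f j)" if "j \<le> k" for j
    proof
      assume l: "legitimate \<pi> ds (spec_EM priv) (fst f j)"
      define f' where "f' = (\<lambda>i. fst f (j + i), \<lambda>i. snd f (j + i))"
      have "is_exec \<pi> ds f'" unfolding f'_def by (rule suffix_exec) fact
      then have "spec_EM priv f'" using l unfolding legitimate_def f'_def by auto
      then have "card {w. priv w (fst f' (k - j) w)} \<le> 1" unfolding spec_EM_def by blast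
      moreover have "{u, v} \<subseteq> {w. priv w (fst f' (k - j) w)}"
        using pu pv that by (simp add: f'_def)
      then have "card {u, v} \<le> card {w. priv w (fst f' (k - j) w)}"
        by (rule card_mono[rotated]) simp
      ultimately show False using une by simp
    qed
    have st: "enat K \<le> stab_steps \<pi> ds (spec_EM priv) f"
    proof (cases "\<exists>j. legitimate \<pi> ds (spec_EM priv) (fst f j)")
      case True
      have "K \<le> (LEAST j. legitimate \<pi> ds (spec_EM priv) (fst f j))"
      proof (rule ccontr)
        assume "\<not> ?thesis"
        then have "(LEAST j. legitimate \<pi> ds (spec_EM priv) (fst f j)) \<le> k" unfolding k_def by simp
        moreover have "legitimate \<pi> ds (spec_EM priv) (fst f (LEAST j. legitimate \<pi> ds (spec_EM priv) (fst f j)))"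
          using True by (rule LeastI_ex)
        ultimately show False using notleg by blast
      qed
      then show ?thesis using True unfolding stab_steps_def by simp
    next
      case False
      then show ?thesis unfolding stab_steps_def by simp
    qed
    have "stab_steps \<pi> ds (spec_EM priv) f \<le> temps_stab \<pi> ds (spec_EM priv)"
      unfolding temps_stab_def using fex by (auto intro: SUP_upper)
    then show ?thesis using st unfolding K_def by simp
  qed
qed

end
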